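(* Let $\alpha\in(1,2)$ and $b>0$. Let $\{X_j\}_{j\in\mathbb N}$ be i.i.d. mean-zero random variables with $X_j\le b$ a.s. and $\mathbb P[X_j<-r]\sim r^{-\alpha}$ as $r\to\infty$. Let $S_0=0$ and $S_n=\sum_{j=1}^nX_j$. Then there are constants $a_0,a_1>0$, not depending on $n$ or $C$, such that for all $C>0$ and $n\in\mathbb N$, $$\mathbb P\Big[\max_{m\in[1,n]\cap\mathbb Z}S_m\ge Cn^{1/\alpha}\Big]\le a_0e^{-a_1C}.$$ *)

theory Defs
  imports "HOL-Probability.Probability" "HOL-Library.Landau_Symbols"
begin

end

theory Submission
  imports Defs
begin


lemma dyadic_up2:
  fixes u :: real assumes "1 \<le> u"
  shows "\<exists>k::nat. 2^k \<le> u \<and> u < 2^(k+1)"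
proof -
  obtain n :: nat where n: "u < 2^n" using real_arch_pow[of 2 u] by auto
  define m where "m = (LEAST m::nat. u < 2^m)"
  have ex: "u < 2^m" unfolding m_def by (rule LeastI[of _ n]) (use n in auto)
  have m0: "m \<noteq> 0" using ex assms by (cases m) auto
  have "\<not> u < 2^(m-1)" proof
    assume "u < 2^(m-1)" then have "m \<le> m - 1" unfolding m_def by (rule Least_le)
    with m0 show False by simp
  qed
  then show ?thesis using ex m0 by (intro exI[of _ "m-1"]) auto
qed

lemma dyadic_down:
  fixes u :: real assumes "0 < u" "u \<le> 1"
  shows "\<exists>k::nat. 1 / 2^(k+1) < u \<and> u * 2^k \<le> 1"
proof -
  have "1 \<le> 1/u" using assms by (simp add: field_simps)
  from dyadic_up2[OF this] obtain k :: nat where k: "2^k \<le> 1/u" "1/u < 2^(k+1)" by auto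
  have "u * 2^k \<le> 1" using k(1) assms by (simp add: field_simps)
  moreover have "1 < u * 2^(k+1)" using k(2) assms by (simp add: field_simps)
  ultimately show ?thesis
    by (intro exI[of _ k]) (auto simp: field_simps)
qed

lemma dyadic_up:
  fixes u :: real assumes "1 < u"
  shows "\<exists>k::nat. 2^k < u \<and> u \<le> 2^(k+1)"
proof -
  obtain n :: nat where n: "u < 2^n" using real_arch_pow[of 2 u] by auto
  define m where "m = (LEAST m::nat. u \<le> 2^m)"
  have ex: "u \<le> 2^m" unfolding m_def by (rule LeastI[of _ n]) (use n in auto)
  have m0: "m \<noteq> 0" using ex assms by (cases m) auto
  have "\<not> u \<le> 2^(m-1)" proof
    assume "u \<le> 2^(m-1)" then have "m \<le> m - 1" unfolding m_def by (rule Least_le)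
    with m0 show False by simp
  qed
  then show ?thesis using ex m0 by (intro exI[of _ "m-1"]) auto
qed

lemma pow2_powr: "((2::real)^n) powr a = (2 powr a)^n"
  by (induction n) (auto simp: powr_mult)

lemma ennreal_geom:
  fixes c q :: real
  assumes "0 \<le> c" "0 \<le> q" "q < 1"
  shows "(\<Sum>k. ennreal (c * q^k)) = ennreal (c / (1 - q))"
proof -
  have "(\<lambda>k. c * q^k) sums (c * (1 / (1 - q)))"
    by (intro sums_mult geometric_sums) (use assms in auto)
  then show ?thesis
    by (subst suminf_ennreal_eq[of _ "c / (1 - q)"]) (use assms in auto)
qed

lemma exp_neg_bound:
  fixes u :: real assumes "0 \<le> u"
  shows "exp (-u) - 1 + u \<le> u\<^sup>2" and "exp (-u) - 1 + u \<le> u"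
proof -
  have "1 + u \<le> exp u" by simp
  then have "exp (-u) \<le> 1 / (1 + u)" using assms
    by (simp add: exp_minus field_simps)
  moreover have "1 / (1 + u) - 1 + u = u^2 / (1 + u)" using assms
    by (simp add: field_simps power2_eq_square)
  moreover have "u^2 / (1 + u) \<le> u^2" using assms
    by (simp add: divide_le_eq mult_le_cancel_left1 zero_le_power2 mult_left_mono)
  ultimately show "exp (-u) - 1 + u \<le> u\<^sup>2" by linarith
  have "exp (-u) \<le> 1" using assms by simp
  then show "exp (-u) - 1 + u \<le> u" by linarith
qed

context prob_space begin

lemma mgf_bound:
  fixes Y :: "'a \<Rightarrow> real" and b K \<alpha> l :: real
  assumes Ym[measurable]: "Y \<in> borel_measurable M"
    and intY: "integrable M Y" and E0: "expectation Y = 0"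
    and bnd: "AE x in M. Y x \<le> b" and b: "b > 0"
    and tail: "\<And>r. r > 0 \<Longrightarrow> prob {x\<in>space M. Y x < - r} \<le> K * r powr (-\<alpha>)"
    and a: "1 < \<alpha>" "\<alpha> < 2" and K: "K \<ge> 0"
    and l: "0 < l" "l \<le> 1" "l * b \<le> 1"
  shows "(\<integral>\<^sup>+x. ennreal (exp (l * Y x)) \<partial>M)
     \<le> ennreal (1 + (b\<^sup>2 + K * 2 powr \<alpha> / (1 - 2 powr \<alpha> / 4) + 2 * K / (1 - 2 powr (1 - \<alpha>))) * l powr \<alpha>)"
proof -
  define q1 where "q1 = 2 powr \<alpha> / 4"
  define q2 where "q2 = (2::real) powr (1 - \<alpha>)"
  have q1: "0 \<le> q1" "q1 < 1"
  proof -
    have "2 powr \<alpha> < (2::real) powr 2" using a by (intro powr_less_mono) auto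
    then show "q1 < 1" by (simp add: q1_def)
  qed (simp add: q1_def)
  have q2: "0 \<le> q2" "q2 < 1"
  proof -
    have "2 powr (1 - \<alpha>) < (2::real) powr 0" using a by (intro powr_less_mono) auto
    then show "q2 < 1" by (simp add: q2_def)
  qed (simp add: q2_def)
  have intE: "integrable M (\<lambda>x. exp (l * Y x))"
  proof (rule integrable_const_bound[where B="exp (l * b)"])
    show "AE x in M. norm (exp (l * Y x)) \<le> exp (l * b)"
      using bnd by eventually_elim (use l in \<open>auto intro: mult_left_mono\<close>)
  qed simp
  define \<phi> where "\<phi> x = exp (l * Y x) - 1 - l * Y x" for x
  have int\<phi>: "integrable M \<phi>" unfolding \<phi>_def using intE intY by auto
  have \<phi>nn: "0 \<le> \<phi> x" for x
    using exp_ge_add_one_self[of "l * Y x"] unfolding \<phi>_def by linarith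
  have Eexp: "expectation (\<lambda>x. exp (l * Y x)) = 1 + expectation \<phi>"
  proof -
    have "expectation \<phi> = expectation (\<lambda>x. exp (l * Y x)) - expectation (\<lambda>x. 1) - expectation (\<lambda>x. l * Y x)"
      unfolding \<phi>_def using intE intY by (simp add: Bochner_Integration.integral_diff)
    then show ?thesis using E0 by (simp add: prob_space)
  qed
  define E where "E k = {x\<in>space M. Y x < - (1 / (l * 2^(k+1)))}" for k :: nat
  define F where "F k = {x\<in>space M. Y x < - (2^k / l)}" for k :: nat
  have E[measurable]: "E k \<in> sets M" for k unfolding E_def by measurable
  have F[measurable]: "F k \<in> sets M" for k unfolding F_def by measurable
  have ptw: "AE x in M. ennreal (\<phi> x) \<le> ennreal (b\<^sup>2 * l powr \<alpha>)
       + (\<Sum>k. ennreal ((1/4)^k) * indicator (E k) x) + (\<Sum>k. ennreal (2^(k+1)) * indicator (F k) x)"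
    using bnd AE_space
  proof eventually_elim
    case (elim x)
    show ?case
    proof (cases "Y x \<ge> 0")
      case True
      have "l * Y x \<le> l * b" using elim l by (intro mult_left_mono) auto
      then have "l * Y x \<le> 1" using l(3) by linarith
      then have "\<phi> x \<le> (l * Y x)^2" using exp_bound[of "l * Y x"] True l
        by (simp add: \<phi>_def)
      also have "\<dots> \<le> (l * b)^2" using True elim l by (intro power_mono mult_left_mono) auto
      also have "\<dots> = b\<^sup>2 * l^2" by (simp add: power_mult_distrib)
      also have "l^2 \<le> l powr \<alpha>"
      proof -
        have "l powr 2 \<le> l powr \<alpha>" by (rule powr_mono') (use l a in auto)
        moreover have "l powr 2 = l^2" using l by (simp add: powr_numeral)
        ultimately show ?thesis by simp
      qed
      then have "b\<^sup>2 * l^2 \<le> b\<^sup>2 * l powr \<alpha>" by (simp add: mult_left_mono)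
      finally have "ennreal (\<phi> x) \<le> ennreal (b\<^sup>2 * l powr \<alpha>)" by (simp add: ennreal_leI)
      then show ?thesis by (simp add: add_increasing2 order_trans[OF _ add_increasing2])
    next
      case False
      define u where "u = - (l * Y x)"
      have u: "u > 0" using False l by (simp add: u_def mult_pos_neg)
      have phiu: "\<phi> x = exp (-u) - 1 + u" by (simp add: \<phi>_def u_def)
      show ?thesis
      proof (cases "u \<le> 1")
        case True
        obtain k :: nat where k: "1 / 2^(k+1) < u" "u * 2^k \<le> 1" using dyadic_down[OF u True] by auto
        have xE: "x \<in> E k" using k(1) elim l unfolding E_def u_def
          by (auto simp: field_simps)
        have "\<phi> x \<le> u^2" using exp_neg_bound(1)[of u] u phiu by simp
        also have "u^2 \<le> (1/4)^k"
        proof -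
          have f4: "(4::real)^k = 2^k * 2^k" by (simp add: power_mult_distrib[symmetric])
          have "u^2 * 4^k = (u * 2^k)^2" unfolding f4 by (simp add: power2_eq_square)
          also have "\<dots> \<le> 1" using k(2) u by (simp add: power_le_one)
          finally show ?thesis by (simp add: power_one_over field_simps)
        qed
        finally have "ennreal (\<phi> x) \<le> ennreal ((1/4)^k) * indicator (E k) x"
          using xE by (simp add: ennreal_leI)
        also have "\<dots> \<le> (\<Sum>k. ennreal ((1/4)^k) * indicator (E k) x)"
          by (rule sum_le_suminf[OF summableI, of "{k}", simplified]) (simp)?
        finally show ?thesis by (simp add: add_increasing2 order_trans[OF _ add_increasing])
      next
        case False
        then have u1: "1 < u" by simp
        obtain k :: nat where k: "2^k < u" "u \<le> 2^(k+1)" using dyadic_up[OF u1] by auto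
        have xF: "x \<in> F k" using k(1) elim l unfolding F_def u_def
          by (auto simp: field_simps)
        have "\<phi> x \<le> u" using exp_neg_bound(2)[of u] u phiu by simp
        also have "u \<le> 2^(k+1)" by fact
        finally have "ennreal (\<phi> x) \<le> ennreal (2^(k+1)) * indicator (F k) x"
          using xF by (simp add: ennreal_leI)
        also have "\<dots> \<le> (\<Sum>k. ennreal (2^(k+1)) * indicator (F k) x)"
          by (rule sum_le_suminf[OF summableI, of "{k}", simplified]) (simp)?
        also have "\<dots> \<le> (ennreal (b\<^sup>2 * l powr \<alpha>) + (\<Sum>k. ennreal ((1/4)^k) * indicator (E k) x))
             + (\<Sum>k. ennreal (2^(k+1)) * indicator (F k) x)"
          by (rule add_increasing) auto
        finally show ?thesis .
      qed
    qed
  qed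
  have sumE: "(\<Sum>k. ennreal ((1/4)^k) * emeasure M (E k)) \<le> ennreal (K * 2 powr \<alpha> * l powr \<alpha> / (1 - q1))"
  proof -
    have "(\<Sum>k. ennreal ((1/4)^k) * emeasure M (E k)) \<le> (\<Sum>k. ennreal (K * 2 powr \<alpha> * l powr \<alpha> * q1^k))"
    proof (intro suminf_le allI)
      fix k :: nat
      have pos: "0 < 1 / (l * 2^(k+1))" using l by simp
      have "emeasure M (E k) = ennreal (prob (E k))" by (simp add: emeasure_eq_measure)
      also have "prob (E k) \<le> K * (1 / (l * 2^(k+1))) powr (-\<alpha>)"
        unfolding E_def by (rule tail[OF pos])
      also have "(1 / (l * 2^(k+1))) powr (-\<alpha>) = (l * 2^(k+1)) powr \<alpha>"
        using l by (simp add: powr_minus_divide powr_divide)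
      also have "\<dots> = l powr \<alpha> * 2 powr \<alpha> * (2 powr \<alpha>)^k"
        using l by (simp add: powr_mult pow2_powr mult_ac)
      finally have "emeasure M (E k) \<le> ennreal (K * (l powr \<alpha> * 2 powr \<alpha> * (2 powr \<alpha>)^k))"
        by (simp add: ennreal_leI)
      then have "ennreal ((1/4)^k) * emeasure M (E k) \<le> ennreal ((1/4)^k) * ennreal (K * (l powr \<alpha> * 2 powr \<alpha> * (2 powr \<alpha>)^k))"
        by (rule mult_left_mono) simp
      also have "\<dots> = ennreal (K * 2 powr \<alpha> * l powr \<alpha> * q1^k)"
        using K by (simp add: ennreal_mult'[symmetric] q1_def power_divide power_one_over field_simps)
      finally show "ennreal ((1/4)^k) * emeasure M (E k) \<le> ennreal (K * 2 powr \<alpha> * l powr \<alpha> * q1^k)" .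
    qed auto
    also have "\<dots> = ennreal (K * 2 powr \<alpha> * l powr \<alpha> / (1 - q1))"
      by (rule ennreal_geom) (use K q1 in auto)
    finally show ?thesis .
  qed
  have sumF: "(\<Sum>k. ennreal (2^(k+1)) * emeasure M (F k)) \<le> ennreal (2 * K * l powr \<alpha> / (1 - q2))"
  proof -
    have "(\<Sum>k. ennreal (2^(k+1)) * emeasure M (F k)) \<le> (\<Sum>k. ennreal (2 * K * l powr \<alpha> * q2^k))"
    proof (intro suminf_le allI)
      fix k :: nat
      have pos: "0 < 2^k / l" using l by simp
      have "emeasure M (F k) = ennreal (prob (F k))" by (simp add: emeasure_eq_measure)
      also have "prob (F k) \<le> K * (2^k / l) powr (-\<alpha>)"
        unfolding F_def by (rule tail[OF pos])
      also have "(2^k / l) powr (-\<alpha>) = l powr \<alpha> * (2 powr (-\<alpha>))^k"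
        using l by (simp add: powr_divide pow2_powr[symmetric] powr_minus field_simps)
      finally have "emeasure M (F k) \<le> ennreal (K * (l powr \<alpha> * (2 powr (-\<alpha>))^k))"
        by (simp add: ennreal_leI)
      then have "ennreal (2^(k+1)) * emeasure M (F k) \<le> ennreal (2^(k+1)) * ennreal (K * (l powr \<alpha> * (2 powr (-\<alpha>))^k))"
        by (rule mult_left_mono) simp
      also have "\<dots> = ennreal (2 * K * l powr \<alpha> * q2^k)"
      proof -
        have "q2^k = 2^k * (2 powr (-\<alpha>))^k"
          by (simp add: q2_def powr_diff powr_minus power_mult_distrib[symmetric] field_simps)
        then show ?thesis using K
          by (simp add: ennreal_mult'[symmetric] mult_ac)
      qed
      finally show "ennreal (2^(k+1)) * emeasure M (F k) \<le> ennreal (2 * K * l powr \<alpha> * q2^k)" .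
    qed auto
    also have "\<dots> = ennreal (2 * K * l powr \<alpha> / (1 - q2))"
      by (rule ennreal_geom) (use K q2 in auto)
    finally show ?thesis .
  qed
  have "ennreal (expectation \<phi>) = (\<integral>\<^sup>+x. ennreal (\<phi> x) \<partial>M)"
    by (rule nn_integral_eq_integral[symmetric]) (use int\<phi> \<phi>nn in auto)
  also have "\<dots> \<le> (\<integral>\<^sup>+x. ennreal (b\<^sup>2 * l powr \<alpha>)
       + (\<Sum>k. ennreal ((1/4)^k) * indicator (E k) x) + (\<Sum>k. ennreal (2^(k+1)) * indicator (F k) x) \<partial>M)"
    by (rule nn_integral_mono_AE[OF ptw])
  also have "\<dots> = ennreal (b\<^sup>2 * l powr \<alpha>)
       + (\<Sum>k. ennreal ((1/4)^k) * emeasure M (E k)) + (\<Sum>k. ennreal (2^(k+1)) * emeasure M (F k))"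
    by (simp add: nn_integral_add nn_integral_suminf nn_integral_cmult_indicator emeasure_space_1)
  also have "\<dots> \<le> ennreal (b\<^sup>2 * l powr \<alpha>) + ennreal (K * 2 powr \<alpha> * l powr \<alpha> / (1 - q1))
       + ennreal (2 * K * l powr \<alpha> / (1 - q2))"
    by (intro add_mono sumE sumF order_refl)
  also have "\<dots> = ennreal (b\<^sup>2 * l powr \<alpha> + K * 2 powr \<alpha> * l powr \<alpha> / (1 - q1) + 2 * K * l powr \<alpha> / (1 - q2))"
  proof -
    have n1: "0 \<le> b\<^sup>2 * l powr \<alpha>" by simp
    have n2: "0 \<le> K * 2 powr \<alpha> * l powr \<alpha> / (1 - q1)" using K q1 by simp
    have n3: "0 \<le> 2 * K * l powr \<alpha> / (1 - q2)" using K q2 by simp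
    show ?thesis using n1 n2 n3 by (simp add: add_nonneg_nonneg del: ennreal_plus add: ennreal_plus[symmetric])
  qed
  also have "b\<^sup>2 * l powr \<alpha> + K * 2 powr \<alpha> * l powr \<alpha> / (1 - q1) + 2 * K * l powr \<alpha> / (1 - q2)
     = (b\<^sup>2 + K * 2 powr \<alpha> / (1 - 2 powr \<alpha> / 4) + 2 * K / (1 - 2 powr (1 - \<alpha>))) * l powr \<alpha>"
    unfolding q1_def[symmetric] q2_def[symmetric] by (simp add: distrib_right)
  finally have main: "expectation \<phi> \<le> (b\<^sup>2 + K * 2 powr \<alpha> / (1 - 2 powr \<alpha> / 4) + 2 * K / (1 - 2 powr (1 - \<alpha>))) * l powr \<alpha>"
    using q1 q2 K by (subst (asm) ennreal_le_iff) (auto intro!: mult_nonneg_nonneg add_nonneg_nonneg simp: q1_def q2_def)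
  have "(\<integral>\<^sup>+x. ennreal (exp (l * Y x)) \<partial>M) = ennreal (expectation (\<lambda>x. exp (l * Y x)))"
    by (rule nn_integral_eq_integral) (use intE in auto)
  also have "\<dots> \<le> ennreal (1 + (b\<^sup>2 + K * 2 powr \<alpha> / (1 - 2 powr \<alpha> / 4) + 2 * K / (1 - 2 powr (1 - \<alpha>))) * l powr \<alpha>)"
    using main Eexp by (intro ennreal_leI) simp
  finally show ?thesis .
qed

end

lemma tail_bound:
  fixes F :: "real \<Rightarrow> real" and \<alpha> :: real
  assumes eq: "F \<sim>[at_top] (\<lambda>r. r powr (-\<alpha>))" and F: "\<And>r. F r \<le> 1" and a: "\<alpha> > 0"
  shows "\<exists>K>0. \<forall>r>0. F r \<le> K * r powr (-\<alpha>)"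
proof -
  have "eventually (\<lambda>r. norm (F r) \<le> 2 * norm (r powr (-\<alpha>))) at_top"
    by (rule asymp_equiv_imp_eventually_le[OF eq]) simp
  then obtain R0 where R0: "\<And>r. r \<ge> R0 \<Longrightarrow> norm (F r) \<le> 2 * norm (r powr (-\<alpha>))"
    by (auto simp: eventually_at_top_linorder)
  define R where "R = max R0 1"
  have R1: "R \<ge> 1" by (simp add: R_def)
  have RA: "R powr \<alpha> \<ge> 1" using R1 a by (simp add: ge_one_powr_ge_zero)
  show ?thesis
  proof (intro exI[of _ "2 * R powr \<alpha>"] conjI allI impI)
    show "0 < 2 * R powr \<alpha>" using R1 by simp
    fix r :: real assume r: "r > 0"
    show "F r \<le> 2 * R powr \<alpha> * r powr - \<alpha>"
    proof (cases "r \<ge> R")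
      case True
      then have "F r \<le> 2 * r powr (-\<alpha>)" using R0[of r] r by (auto simp: R_def)
      also have "\<dots> \<le> 2 * R powr \<alpha> * r powr - \<alpha>" using RA r
        by (simp add: mult_right_mono)
      finally show ?thesis .
    next
      case False
      then have "R powr (-\<alpha>) \<le> r powr (-\<alpha>)" using r a
        by (intro powr_mono2') auto
      then have "1 \<le> R powr \<alpha> * r powr (-\<alpha>)"
        using R1 by (simp add: powr_minus field_simps)
      moreover have "R powr \<alpha> * r powr (-\<alpha>) \<le> 2 * R powr \<alpha> * r powr (-\<alpha>)"
        by simp
      ultimately show ?thesis using F[of r] by linarith
    qed
  qed
qed




context prob_space begin

lemma indep_var_nn_integral_mult:
  fixes X1 X2 :: "'a \<Rightarrow> real"
  assumes ind: "indep_var borel X1 borel X2"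
    and nn: "\<And>\<omega>. 0 \<le> X1 \<omega>" "\<And>\<omega>. 0 \<le> X2 \<omega>"
  shows "(\<integral>\<^sup>+\<omega>. ennreal (X1 \<omega> * X2 \<omega>) \<partial>M) = (\<integral>\<^sup>+\<omega>. ennreal (X1 \<omega>) \<partial>M) * (\<integral>\<^sup>+\<omega>. ennreal (X2 \<omega>) \<partial>M)"
proof -
  have cb: "case_bool borel borel = (\<lambda>_::bool. (borel :: real measure))"
    by (rule ext) (simp split: bool.split)
  have iv: "indep_vars (\<lambda>_. borel) (case_bool X1 X2) UNIV"
    using ind unfolding indep_var_def cb .
  have iv2: "indep_vars (\<lambda>_. borel) (\<lambda>i \<omega>. ennreal (case_bool X1 X2 i \<omega>)) UNIV"
    by (rule indep_vars_compose2[OF iv]) measurable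
  have "(\<integral>\<^sup>+\<omega>. (\<Prod>i\<in>UNIV. ennreal (case_bool X1 X2 i \<omega>)) \<partial>M) = (\<Prod>i\<in>UNIV. \<integral>\<^sup>+\<omega>. ennreal (case_bool X1 X2 i \<omega>) \<partial>M)"
    by (rule indep_vars_nn_integral[OF _ iv2]) auto
  then show ?thesis by (simp add: UNIV_bool ennreal_mult nn mult.commute)
qed

lemma indep_exp_prod:
  fixes X :: "nat \<Rightarrow> 'a \<Rightarrow> real" and l :: real
  assumes ind: "indep_vars (\<lambda>_. borel) X I" and J: "finite J" "J \<subseteq> I"
  shows "(\<integral>\<^sup>+\<omega>. ennreal (\<Prod>j\<in>J. exp (l * X j \<omega>)) \<partial>M) = (\<Prod>j\<in>J. \<integral>\<^sup>+\<omega>. ennreal (exp (l * X j \<omega>)) \<partial>M)"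
proof -
  have iv: "indep_vars (\<lambda>_. borel) (\<lambda>j \<omega>. ennreal (exp (l * X j \<omega>))) J"
    by (rule indep_vars_compose2[OF indep_vars_subset[OF ind J(2)]]) measurable
  have "(\<integral>\<^sup>+\<omega>. ennreal (\<Prod>j\<in>J. exp (l * X j \<omega>)) \<partial>M) = (\<integral>\<^sup>+\<omega>. (\<Prod>j\<in>J. ennreal (exp (l * X j \<omega>))) \<partial>M)"
    by (simp add: prod_ennreal)
  also have "\<dots> = (\<Prod>j\<in>J. \<integral>\<^sup>+\<omega>. ennreal (exp (l * X j \<omega>)) \<partial>M)"
    by (rule indep_vars_nn_integral[OF J(1) iv]) auto
  finally show ?thesis .
qed

lemma max_ineq:
  fixes X :: "nat \<Rightarrow> 'a \<Rightarrow> real" and l x :: real and n :: nat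
  assumes meas: "\<And>j. j \<ge> 1 \<Longrightarrow> X j \<in> borel_measurable M"
    and ind: "indep_vars (\<lambda>_. borel) X {1..}"
    and ge1: "\<And>j. j \<ge> 1 \<Longrightarrow> 1 \<le> (\<integral>\<^sup>+\<omega>. ennreal (exp (l * X j \<omega>)) \<partial>M)"
    and l: "l \<ge> 0" and n1: "n \<ge> 1"
  shows "ennreal (exp (l * x)) * emeasure M {\<omega>\<in>space M. x \<le> Max ((\<lambda>m. \<Sum>j\<in>{1..m}. X j \<omega>) ` {1..n})}
      \<le> (\<Prod>j\<in>{1..n}. \<integral>\<^sup>+\<omega>. ennreal (exp (l * X j \<omega>)) \<partial>M)"
proof -
  define S where "S m \<omega> = (\<Sum>j\<in>{1..m}. X j \<omega>)" for m \<omega>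
  have Sm[measurable]: "S m \<in> borel_measurable M" for m
    unfolding S_def by (intro borel_measurable_sum) (auto intro: meas)
  define A where "A k = {\<omega>\<in>space M. x \<le> S k \<omega> \<and> (\<forall>m\<in>{1..<k}. S m \<omega> < x)}" for k
  have A[measurable]: "A k \<in> sets M" for k unfolding A_def by measurable
  have dis: False if "\<omega> \<in> A a" "\<omega> \<in> A c" "1 \<le> a" "a < c" for \<omega> a c
  proof -
    have "a \<in> {1..<c}" using that by auto
    moreover have "\<forall>m\<in>{1..<c}. S m \<omega> < x" using that(2) by (simp add: A_def)
    ultimately have "S a \<omega> < x" by blast
    moreover have "x \<le> S a \<omega>" using that(1) by (simp add: A_def)
    ultimately show False by simp
  qed
  have disj: "disjoint_family_on A {1..n}"
    unfolding disjoint_family_on_def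
  proof (intro ballI impI)
    fix k k' assume kk: "k \<in> {1..n}" "k' \<in> {1..n}" "k \<noteq> k'"
    show "A k \<inter> A k' = {}"
    proof (cases "k < k'")
      case True then show ?thesis using dis[of _ k k'] kk by auto
    next
      case False then have "k' < k" using kk by auto
      then show ?thesis using dis[of _ k' k] kk by auto
    qed
  qed
  have cover: "{\<omega>\<in>space M. x \<le> Max ((\<lambda>m. \<Sum>j\<in>{1..m}. X j \<omega>) ` {1..n})} \<subseteq> (\<Union>k\<in>{1..n}. A k)"
  proof
    fix \<omega> assume \<omega>: "\<omega> \<in> {\<omega>\<in>space M. x \<le> Max ((\<lambda>m. \<Sum>j\<in>{1..m}. X j \<omega>) ` {1..n})}"
    show "\<omega> \<in> (\<Union>k\<in>{1..n}. A k)"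
    proof (cases "n = 0")
      case True then show ?thesis using n1 by simp
    next
      case False
      have "Max ((\<lambda>m. S m \<omega>) ` {1..n}) \<in> (\<lambda>m. S m \<omega>) ` {1..n}"
        by (rule Max_in) (use False in auto)
      then obtain m where m: "m \<in> {1..n}" "S m \<omega> = Max ((\<lambda>m. S m \<omega>) ` {1..n})" by auto
      have xm: "x \<le> S m \<omega>" using \<omega> m unfolding S_def by simp
      define k where "k = (LEAST k. 1 \<le> k \<and> x \<le> S k \<omega>)"
      have k: "1 \<le> k \<and> x \<le> S k \<omega>" unfolding k_def by (rule LeastI[of _ m]) (use m xm in auto)
      have km: "k \<le> m" unfolding k_def by (rule Least_le) (use m xm in auto)
      have "\<forall>m'\<in>{1..<k}. S m' \<omega> < x"
      proof
        fix m' assume "m' \<in> {1..<k}"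
        then have "\<not> (1 \<le> m' \<and> x \<le> S m' \<omega>)" unfolding k_def by (intro not_less_Least) auto
        then show "S m' \<omega> < x" using \<open>m' \<in> {1..<k}\<close> by auto
      qed
      then have "\<omega> \<in> A k" using k \<omega> unfolding A_def by auto
      then show ?thesis using k km m by auto
    qed
  qed
  define P where "P j = (\<integral>\<^sup>+\<omega>. ennreal (exp (l * X j \<omega>)) \<partial>M)" for j
  have step: "ennreal (exp (l * x)) * emeasure M (A k) \<le> (\<integral>\<^sup>+\<omega>. indicator (A k) \<omega> * ennreal (exp (l * S n \<omega>)) \<partial>M)"
    if k: "k \<in> {1..n}" for k
  proof -
    define g1 where "g1 v = (if x \<le> (\<Sum>i\<in>{1..k}. v i) \<and> (\<forall>m\<in>{1..<k}. (\<Sum>i\<in>{1..m}. v i) < x)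
       then exp (l * (\<Sum>i\<in>{1..k}. v i)) else 0)" for v :: "nat \<Rightarrow> real"
    define g2 where "g2 v = (\<Prod>i\<in>{k+1..n}. exp (l * v i))" for v :: "nat \<Rightarrow> real"
    have g1m: "g1 \<in> borel_measurable (PiM {1..k} (\<lambda>_. borel))" unfolding g1_def by measurable
    have g2m: "g2 \<in> borel_measurable (PiM {k+1..n} (\<lambda>_. borel))" unfolding g2_def by measurable
    have iv: "indep_var borel (g1 \<circ> (\<lambda>\<omega>. restrict (\<lambda>i. X i \<omega>) {1..k})) borel (g2 \<circ> (\<lambda>\<omega>. restrict (\<lambda>i. X i \<omega>) {k+1..n}))"
      by (rule indep_var_compose[OF indep_var_restrict[OF ind] g1m g2m]) auto
    define G1 where "G1 \<omega> = g1 (restrict (\<lambda>i. X i \<omega>) {1..k})" for \<omega>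
    define G2 where "G2 \<omega> = g2 (restrict (\<lambda>i. X i \<omega>) {k+1..n})" for \<omega>
    have iv': "indep_var borel G1 borel G2" using iv unfolding G1_def G2_def comp_def .
    have G1nn: "0 \<le> G1 \<omega>" for \<omega> by (simp add: G1_def g1_def)
    have G2nn: "0 \<le> G2 \<omega>" for \<omega> by (simp add: G2_def g2_def prod_nonneg)
    have G1eq: "G1 \<omega> = indicator (A k) \<omega> * exp (l * S k \<omega>)" if "\<omega> \<in> space M" for \<omega>
    proof -
      have "(\<Sum>i\<in>{1..m}. restrict (\<lambda>i. X i \<omega>) {1..k} i) = S m \<omega>" if "m \<le> k" for m
        unfolding S_def using that by (intro sum.cong) auto
      then show ?thesis using that k by (auto simp: G1_def g1_def A_def indicator_def)
    qed
    have G2eq: "G2 \<omega> = (\<Prod>i\<in>{k+1..n}. exp (l * X i \<omega>))" for \<omega>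
      unfolding G2_def g2_def by (intro prod.cong) auto
    have G2int: "(\<integral>\<^sup>+\<omega>. ennreal (G2 \<omega>) \<partial>M) = (\<Prod>i\<in>{k+1..n}. P i)"
    proof -
      have "(\<integral>\<^sup>+\<omega>. ennreal (G2 \<omega>) \<partial>M) = (\<integral>\<^sup>+\<omega>. ennreal (\<Prod>i\<in>{k+1..n}. exp (l * X i \<omega>)) \<partial>M)"
        by (simp add: G2eq)
      also have "\<dots> = (\<Prod>i\<in>{k+1..n}. P i)" unfolding P_def
        by (rule indep_exp_prod[OF ind]) auto
      finally show ?thesis .
    qed
    have G2ge: "1 \<le> (\<integral>\<^sup>+\<omega>. ennreal (G2 \<omega>) \<partial>M)"
    proof -
      have "(1::ennreal) = (\<Prod>i\<in>{k+1..n}. 1)" by simp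
      also have "\<dots> \<le> (\<Prod>i\<in>{k+1..n}. P i)"
        by (rule prod_mono_ennreal) (use k ge1 in \<open>auto simp: P_def\<close>)
      finally show ?thesis using G2int by simp
    qed
    have "ennreal (exp (l * x)) * emeasure M (A k) = (\<integral>\<^sup>+\<omega>. ennreal (exp (l * x)) * indicator (A k) \<omega> \<partial>M)"
      by (simp add: nn_integral_cmult_indicator)
    also have "\<dots> \<le> (\<integral>\<^sup>+\<omega>. ennreal (G1 \<omega>) \<partial>M)"
    proof (rule nn_integral_mono)
      fix \<omega> assume \<omega>: "\<omega> \<in> space M"
      show "ennreal (exp (l * x)) * indicator (A k) \<omega> \<le> ennreal (G1 \<omega>)"
      proof (cases "\<omega> \<in> A k")
        case True
        then have "x \<le> S k \<omega>" by (simp add: A_def)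
        then have "exp (l * x) \<le> exp (l * S k \<omega>)" using l by (simp add: mult_left_mono)
        then show ?thesis using True \<omega> by (simp add: G1eq ennreal_leI)
      qed simp
    qed
    also have "\<dots> \<le> (\<integral>\<^sup>+\<omega>. ennreal (G1 \<omega>) \<partial>M) * (\<integral>\<^sup>+\<omega>. ennreal (G2 \<omega>) \<partial>M)"
      using mult_left_mono[OF G2ge, of "\<integral>\<^sup>+\<omega>. ennreal (G1 \<omega>) \<partial>M"] by simp
    also have "\<dots> = (\<integral>\<^sup>+\<omega>. ennreal (G1 \<omega> * G2 \<omega>) \<partial>M)"
      by (rule indep_var_nn_integral_mult[OF iv' G1nn G2nn, symmetric])
    also have "\<dots> = (\<integral>\<^sup>+\<omega>. indicator (A k) \<omega> * ennreal (exp (l * S n \<omega>)) \<partial>M)"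
    proof (rule nn_integral_cong)
      fix \<omega> assume \<omega>: "\<omega> \<in> space M"
      have "S n \<omega> = S k \<omega> + (\<Sum>i\<in>{k+1..n}. X i \<omega>)"
      proof -
        have "{1..n} = {1..k} \<union> {k+1..n}" using k by auto
        then show ?thesis unfolding S_def by (simp add: sum.union_disjoint)
      qed
      then have "exp (l * S n \<omega>) = exp (l * S k \<omega>) * (\<Prod>i\<in>{k+1..n}. exp (l * X i \<omega>))"
        by (simp add: distrib_left exp_add exp_sum sum_distrib_left)
      then show "ennreal (G1 \<omega> * G2 \<omega>) = indicator (A k) \<omega> * ennreal (exp (l * S n \<omega>))"
        using \<omega> by (simp add: G1eq G2eq indicator_def)
    qed
    finally show ?thesis .
  qed
  have "ennreal (exp (l * x)) * emeasure M {\<omega>\<in>space M. x \<le> Max ((\<lambda>m. \<Sum>j\<in>{1..m}. X j \<omega>) ` {1..n})}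
      \<le> ennreal (exp (l * x)) * (\<Sum>k\<in>{1..n}. emeasure M (A k))"
  proof (rule mult_left_mono)
    have "emeasure M {\<omega>\<in>space M. x \<le> Max ((\<lambda>m. \<Sum>j\<in>{1..m}. X j \<omega>) ` {1..n})} \<le> emeasure M (\<Union>k\<in>{1..n}. A k)"
      by (rule emeasure_mono[OF cover]) auto
    also have "\<dots> \<le> (\<Sum>k\<in>{1..n}. emeasure M (A k))"
      by (rule emeasure_subadditive_finite) auto
    finally show "emeasure M {\<omega>\<in>space M. x \<le> Max ((\<lambda>m. \<Sum>j\<in>{1..m}. X j \<omega>) ` {1..n})} \<le> (\<Sum>k\<in>{1..n}. emeasure M (A k))" .
  qed simp
  also have "\<dots> = (\<Sum>k\<in>{1..n}. ennreal (exp (l * x)) * emeasure M (A k))"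
    by (simp add: sum_distrib_left)
  also have "\<dots> \<le> (\<Sum>k\<in>{1..n}. \<integral>\<^sup>+\<omega>. indicator (A k) \<omega> * ennreal (exp (l * S n \<omega>)) \<partial>M)"
    by (rule sum_mono) (rule step)
  also have "\<dots> = (\<integral>\<^sup>+\<omega>. (\<Sum>k\<in>{1..n}. indicator (A k) \<omega> * ennreal (exp (l * S n \<omega>))) \<partial>M)"
    by (rule nn_integral_sum[symmetric]) auto
  also have "\<dots> \<le> (\<integral>\<^sup>+\<omega>. ennreal (exp (l * S n \<omega>)) \<partial>M)"
  proof (rule nn_integral_mono)
    fix \<omega>
    have "(\<Sum>k\<in>{1..n}. indicator (A k) \<omega> * ennreal (exp (l * S n \<omega>)))
        = (\<Sum>k\<in>{1..n}. indicator (A k) \<omega>) * ennreal (exp (l * S n \<omega>))"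
      by (simp add: sum_distrib_right)
    also have "(\<Sum>k\<in>{1..n}. indicator (A k) \<omega> :: ennreal) = indicator (\<Union>k\<in>{1..n}. A k) \<omega>"
      by (rule indicator_UN_disjoint[symmetric]) (use disj in auto)
    also have "indicator (\<Union>k\<in>{1..n}. A k) \<omega> * ennreal (exp (l * S n \<omega>)) \<le> ennreal (exp (l * S n \<omega>))"
      by (simp add: indicator_def)
    finally show "(\<Sum>k\<in>{1..n}. indicator (A k) \<omega> * ennreal (exp (l * S n \<omega>))) \<le> ennreal (exp (l * S n \<omega>))" .
  qed
  also have "\<dots> = (\<integral>\<^sup>+\<omega>. ennreal (\<Prod>j\<in>{1..n}. exp (l * X j \<omega>)) \<partial>M)"
    by (simp add: S_def sum_distrib_left exp_sum)
  also have "\<dots> = (\<Prod>j\<in>{1..n}. \<integral>\<^sup>+\<omega>. ennreal (exp (l * X j \<omega>)) \<partial>M)"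
    by (rule indep_exp_prod[OF ind]) auto
  finally show ?thesis .
qed

end

theorem lemma5p8:
  fixes M :: "'s measure" and X :: "nat \<Rightarrow> 's \<Rightarrow> real"
    and \<alpha> b :: real
  assumes "prob_space M"
    and "1 < \<alpha>" and "\<alpha> < 2" and "b > 0"
    and "\<And>j. j \<ge> 1 \<Longrightarrow> X j \<in> borel_measurable M"
    and "prob_space.indep_vars M (\<lambda>_. borel) X {1..}"
    and "\<And>i j. i \<ge> 1 \<Longrightarrow> j \<ge> 1 \<Longrightarrow> distr M borel (X i) = distr M borel (X j)"
    and "\<And>j. j \<ge> 1 \<Longrightarrow> integrable M (X j)"
    and "\<And>j. j \<ge> 1 \<Longrightarrow> prob_space.expectation M (X j) = 0"
    and "\<And>j. j \<ge> 1 \<Longrightarrow> (AE x in M. X j x \<le> b)"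
    and "\<And>j. j \<ge> 1 \<Longrightarrow>
           (\<lambda>r. measure M {x \<in> space M. X j x < - r}) \<sim>[at_top] (\<lambda>r. r powr (- \<alpha>))"
  shows "\<exists>a0 a1. a0 > 0 \<and> a1 > 0 \<and>
    (\<forall>C > 0. \<forall>n::nat \<ge> 1.
       measure M {x \<in> space M. Max ((\<lambda>m. \<Sum>j\<in>{1..m}. X j x) ` {1..n}) \<ge> C * real n powr (1 / \<alpha>)}
         \<le> a0 * exp (- a1 * C))"
  proof -
  interpret P: prob_space M by fact
  have meas: "\<And>j. j \<ge> 1 \<Longrightarrow> X j \<in> borel_measurable M" by fact
  have ind: "P.indep_vars (\<lambda>_. borel) X {1..}" using assms(6) by simp
  have Fle: "\<And>r. measure M {x\<in>space M. X 1 x < - r} \<le> 1" by (rule P.prob_le_1)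
  have a0: "\<alpha> > 0" using assms(2) by simp
  obtain K where K: "K > 0" "\<forall>r>0. measure M {x\<in>space M. X 1 x < - r} \<le> K * r powr (-\<alpha>)"
    using tail_bound[OF assms(11)[of 1] Fle a0] by auto
  define D where "D = b\<^sup>2 + K * 2 powr \<alpha> / (1 - 2 powr \<alpha> / 4) + 2 * K / (1 - 2 powr (1 - \<alpha>))"
  define c where "c = min 1 (1 / b)"
  have q1: "2 powr \<alpha> / 4 < (1::real)"
  proof -
    have "2 powr \<alpha> < (2::real) powr 2" using assms(3) by (intro powr_less_mono) auto
    then show ?thesis by simp
  qed
  have q2: "2 powr (1 - \<alpha>) < (1::real)"
  proof -
    have "2 powr (1 - \<alpha>) < (2::real) powr 0" using assms(2) by (intro powr_less_mono) auto
    then show ?thesis by simp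
  qed
  have D0: "D \<ge> 0" unfolding D_def using K q1 q2
    by (intro add_nonneg_nonneg divide_nonneg_nonneg mult_nonneg_nonneg) auto
  have c: "0 < c" "c \<le> 1" "c * b \<le> 1"
  proof -
    show "0 < c" using assms(4) by (simp add: c_def)
    show "c \<le> 1" by (simp add: c_def)
    have "c * b \<le> (1 / b) * b" by (rule mult_right_mono) (use assms(4) in \<open>simp_all add: c_def\<close>)
    then show "c * b \<le> 1" using assms(4) by simp
  qed
  show ?thesis
  proof (rule exI[of _ "exp D"], rule exI[of _ c], intro conjI allI impI)
    show "0 < exp D" by simp
    show "0 < c" by fact
    fix C :: real and n :: nat assume C: "C > 0" and n: "n \<ge> 1"
    define N where "N = real n powr (1 / \<alpha>)"
    have N1: "N \<ge> 1" unfolding N_def using n a0 by (intro ge_one_powr_ge_zero) auto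
    define l where "l = c / N"
    have l: "0 < l" "l \<le> 1" "l * b \<le> 1"
    proof -
      show "0 < l" using c N1 by (simp add: l_def)
      have "l \<le> c" using c N1 by (simp add: l_def divide_le_eq mult_le_cancel_left1)
      then show "l \<le> 1" using c by simp
      have "l * b \<le> c * b" using \<open>l \<le> c\<close> by (rule mult_right_mono) (use assms(4) in simp)
      then show "l * b \<le> 1" using c(3) by linarith
    qed
    have lpow: "l powr \<alpha> = c powr \<alpha> / real n"
    proof -
      have "N powr \<alpha> = real n powr (1 / \<alpha> * \<alpha>)" unfolding N_def by (rule powr_powr)
      also have "1 / \<alpha> * \<alpha> = 1" using a0 by simp
      finally have Na: "N powr \<alpha> = real n" by simp
      have "l powr \<alpha> = c powr \<alpha> / N powr \<alpha>" unfolding l_def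
        by (rule powr_divide) (use c N1 in \<open>auto\<close>)?
      then show ?thesis unfolding Na .
    qed
    have mgf1: "(\<integral>\<^sup>+\<omega>. ennreal (exp (l * X 1 \<omega>)) \<partial>M) \<le> ennreal (1 + D * l powr \<alpha>)"
      unfolding D_def
      by (rule P.mgf_bound[OF meas[of 1] assms(8)[of 1] assms(9)[of 1] assms(10)[of 1] assms(4) _ assms(2,3) _ l])
         (use K in auto)
    have same: "(\<integral>\<^sup>+\<omega>. ennreal (exp (l * X j \<omega>)) \<partial>M) = (\<integral>\<^sup>+\<omega>. ennreal (exp (l * X 1 \<omega>)) \<partial>M)"
      if j: "j \<ge> 1" for j
    proof -
      have "(\<integral>\<^sup>+\<omega>. ennreal (exp (l * X j \<omega>)) \<partial>M) = (\<integral>\<^sup>+y. ennreal (exp (l * y)) \<partial>distr M borel (X j))"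
        by (subst nn_integral_distr) (use meas j in auto)
      also have "distr M borel (X j) = distr M borel (X 1)" using assms(7)[of j 1] j by simp
      also have "(\<integral>\<^sup>+y. ennreal (exp (l * y)) \<partial>distr M borel (X 1)) = (\<integral>\<^sup>+\<omega>. ennreal (exp (l * X 1 \<omega>)) \<partial>M)"
        by (subst nn_integral_distr) (use meas in auto)
      finally show ?thesis .
    qed
    have ge1: "1 \<le> (\<integral>\<^sup>+\<omega>. ennreal (exp (l * X j \<omega>)) \<partial>M)" if j: "j \<ge> 1" for j
    proof -
      have mj[measurable]: "X j \<in> borel_measurable M" using meas j .
      have intE: "integrable M (\<lambda>\<omega>. exp (l * X j \<omega>))"
      proof (rule P.integrable_const_bound[where B="exp (l * b)"])
        show "AE x in M. norm (exp (l * X j x)) \<le> exp (l * b)"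
          using assms(10)[OF j] by eventually_elim (use l in \<open>auto intro: mult_left_mono\<close>)
      qed simp
      have intY: "integrable M (X j)" using assms(8) j .
      have "1 = P.expectation (\<lambda>\<omega>. 1 + l * X j \<omega>)"
        using intY assms(9)[OF j] by (simp add: P.prob_space)
      also have "\<dots> \<le> P.expectation (\<lambda>\<omega>. exp (l * X j \<omega>))"
        by (rule integral_mono) (use intE intY in auto)
      finally have "ennreal 1 \<le> ennreal (P.expectation (\<lambda>\<omega>. exp (l * X j \<omega>)))" by (rule ennreal_leI)
      also have "\<dots> = (\<integral>\<^sup>+\<omega>. ennreal (exp (l * X j \<omega>)) \<partial>M)"
        by (rule nn_integral_eq_integral[symmetric]) (use intE in auto)
      finally show ?thesis by simp
    qed
    define x where "x = C * N"
    have lx: "l * x = c * C" unfolding l_def x_def using N1 by simp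
    have mi: "ennreal (exp (l * x)) * emeasure M {\<omega>\<in>space M. x \<le> Max ((\<lambda>m. \<Sum>j\<in>{1..m}. X j \<omega>) ` {1..n})}
      \<le> (\<Prod>j\<in>{1..n}. \<integral>\<^sup>+\<omega>. ennreal (exp (l * X j \<omega>)) \<partial>M)"
      by (rule P.max_ineq[OF meas ind ge1]) (use l n in auto)
    also have "\<dots> \<le> (\<Prod>j\<in>{1..n}. ennreal (1 + D * l powr \<alpha>))"
    proof (rule prod_mono_ennreal)
      fix j assume "j \<in> {1..n}"
      then have j1: "1 \<le> j" by simp
      show "(\<integral>\<^sup>+\<omega>. ennreal (exp (l * X j \<omega>)) \<partial>M) \<le> ennreal (1 + D * l powr \<alpha>)"
        unfolding same[OF j1] by (rule mgf1)
    qed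
    also have "\<dots> = ennreal ((1 + D * l powr \<alpha>) ^ n)"
    proof -
      have nn: "0 \<le> 1 + D * l powr \<alpha>" using D0 by simp
      have "(\<Prod>j\<in>{1..n}. ennreal (1 + D * l powr \<alpha>)) = ennreal (1 + D * l powr \<alpha>) ^ n"
        by (simp only: prod_constant card_atLeastAtMost) simp
      also have "\<dots> = ennreal ((1 + D * l powr \<alpha>) ^ n)" by (rule ennreal_power[OF nn])
      finally show ?thesis .
    qed
    also have "\<dots> \<le> ennreal (exp D)"
    proof (rule ennreal_leI)
      have "(1 + D * l powr \<alpha>) ^ n \<le> exp (D * l powr \<alpha>) ^ n"
        by (rule power_mono) (use D0 in auto)
      also have "exp (D * l powr \<alpha>) ^ n = exp (D * c powr \<alpha>)"
      proof -
        have "exp (D * l powr \<alpha>) ^ n = exp (real n * (D * l powr \<alpha>))" by (rule exp_of_nat_mult[symmetric])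
        also have "real n * (D * l powr \<alpha>) = D * c powr \<alpha>" unfolding lpow using n by simp
        finally show ?thesis .
      qed
      also have "\<dots> \<le> exp D"
      proof -
        have "c powr \<alpha> \<le> 1" using c a0 by (intro powr_le1) auto
        then show ?thesis using D0 by (simp add: mult_left_le)
      qed
      finally show "(1 + D * l powr \<alpha>) ^ n \<le> exp D" .
    qed
    finally have "ennreal (exp (c * C)) * ennreal (measure M {\<omega>\<in>space M. x \<le> Max ((\<lambda>m. \<Sum>j\<in>{1..m}. X j \<omega>) ` {1..n})})
        \<le> ennreal (exp D)"
      by (simp add: lx P.emeasure_eq_measure ennreal_leI)
    then have "ennreal (exp (c * C) * measure M {\<omega>\<in>space M. x \<le> Max ((\<lambda>m. \<Sum>j\<in>{1..m}. X j \<omega>) ` {1..n})})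
        \<le> ennreal (exp D)"
      by (simp only: ennreal_mult[symmetric] exp_ge_zero measure_nonneg)
    then have "exp (c * C) * measure M {\<omega>\<in>space M. x \<le> Max ((\<lambda>m. \<Sum>j\<in>{1..m}. X j \<omega>) ` {1..n})} \<le> exp D"
      by (subst (asm) ennreal_le_iff) simp_all
    then have "measure M {\<omega>\<in>space M. x \<le> Max ((\<lambda>m. \<Sum>j\<in>{1..m}. X j \<omega>) ` {1..n})} \<le> exp D / exp (c * C)"
      by (simp add: pos_le_divide_eq mult.commute)
    also have "exp D / exp (c * C) = exp D * exp (- c * C)"
      by (simp add: exp_minus divide_inverse)
    finally show "measure M {x \<in> space M. Max ((\<lambda>m. \<Sum>j\<in>{1..m}. X j x) ` {1..n}) \<ge> C * real n powr (1 / \<alpha>)}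
         \<le> exp D * exp (- c * C)"
      unfolding x_def N_def .
  qed
qed

end
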